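(* Let $X$ be a topological space with $|X|\ge 2$ and $G$ an infinite Abelian group. If $X$ is not anti-discrete and has a base of clopen sets, then every Korovin orbit $G_f$ in $X^G$ is a regular zero-dimensional space.
   Context: $X^G$ carries the product topology. For $f\in X^G$ and $g\in G$ let $gf\in X^G$ be given by $(gf)(x)=f(xg)$, and let $G_f=\{gf:g\in G\}\subseteq X^G$ with the subspace topology. The map $f\colon G\to X$ is a Korovin mapping if $\pi_M(G_f)=X^M$ for every countable $M\subseteq G$, where $\pi_M\colon X^G\to X^M$ is the projection; in that case $G_f$ is called a Korovin orbit. A space is anti-discrete if its only open sets are $\emptyset$ and the whole space. Regular means $T_1$ and: every open neighborhood $U$ of a point $x$ contains an open neighborhood $V$ of $x$ with $\overline{V}\subseteq U$. Zero-dimensional means having a base of clopen sets. *)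

theory Defs
  imports "HOL-Analysis.Analysis"
begin

definition shift_act :: "'g::ab_group_add \<Rightarrow> ('g \<Rightarrow> 'a) \<Rightarrow> ('g \<Rightarrow> 'a)" where
  "shift_act g f = (\<lambda>x. f (x + g))"

definition orbit_of :: "('g::ab_group_add \<Rightarrow> 'a) \<Rightarrow> ('g \<Rightarrow> 'a) set" where
  "orbit_of f = {shift_act g f | g. g \<in> UNIV}"

definition korovin_mapping :: "'a topology \<Rightarrow> ('g::ab_group_add \<Rightarrow> 'a) \<Rightarrow> bool" where
  "korovin_mapping X f \<longleftrightarrow>
     (\<forall>x. f x \<in> topspace X) \<and>
     (\<forall>M. countable M \<longrightarrow> (\<lambda>h. restrict h M) ` orbit_of f = PiE M (\<lambda>_. topspace X))"

definition anti_discrete :: "'a topology \<Rightarrow> bool" where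
  "anti_discrete X \<longleftrightarrow> (\<forall>U. openin X U \<longrightarrow> U = {} \<or> U = topspace X)"

definition zero_dimensional :: "'a topology \<Rightarrow> bool" where
  "zero_dimensional X \<longleftrightarrow>
     (\<forall>U x. openin X U \<and> x \<in> U \<longrightarrow> (\<exists>V. openin X V \<and> closedin X V \<and> x \<in> V \<and> V \<subseteq> U))"

end

theory Submission
  imports Defs
begin

lemma zd_product:
  assumes "zero_dimensional X"
  shows "zero_dimensional (product_topology (\<lambda>_. X) I)"
  unfolding zero_dimensional_def
proof (intro allI impI, elim conjE)
  fix S x assume S: "openin (product_topology (\<lambda>_. X) I) S" and x: "x \<in> S"
  have "\<forall>x\<in>S. \<exists>U. finite {i \<in> I. U i \<noteq> topspace X} \<and> (\<forall>i\<in>I. openin X (U i))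
     \<and> x \<in> PiE I U \<and> PiE I U \<subseteq> S"
    using S by (simp only: openin_product_topology_alt)
  then obtain U where U: "finite {i \<in> I. U i \<noteq> topspace X}" "\<forall>i\<in>I. openin X (U i)"
    "x \<in> PiE I U" "PiE I U \<subseteq> S"
    using x by blast
  have xU: "x i \<in> U i" if "i \<in> I" for i using U(3) that by (simp add: PiE_iff)
  have xext: "x \<in> extensional I" using U(3) by (simp add: PiE_iff)
  define V where "V i = (if U i = topspace X then topspace X
      else (SOME W. openin X W \<and> closedin X W \<and> x i \<in> W \<and> W \<subseteq> U i))" for i
  have V: "openin X (V i) \<and> closedin X (V i) \<and> x i \<in> V i \<and> V i \<subseteq> U i" if "i \<in> I" for i
  proof (cases "U i = topspace X")
    case True
    then show ?thesis using xU[OF that] by (simp add: V_def)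
  next
    case False
    have "\<exists>W. openin X W \<and> closedin X W \<and> x i \<in> W \<and> W \<subseteq> U i"
      using assms U(2) that xU[OF that] unfolding zero_dimensional_def by blast
    then have "openin X (SOME W. openin X W \<and> closedin X W \<and> x i \<in> W \<and> W \<subseteq> U i) \<and> closedin X (SOME W. openin X W \<and> closedin X W \<and> x i \<in> W \<and> W \<subseteq> U i) \<and> x i \<in> (SOME W. openin X W \<and> closedin X W \<and> x i \<in> W \<and> W \<subseteq> U i) \<and> (SOME W. openin X W \<and> closedin X W \<and> x i \<in> W \<and> W \<subseteq> U i) \<subseteq> U i"
      by (rule someI_ex)
    then show ?thesis using False by (simp only: V_def if_False)
  qed
  have sub: "{i \<in> I. V i \<noteq> topspace X} \<subseteq> {i \<in> I. U i \<noteq> topspace X}"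
    unfolding V_def by auto
  have fin: "finite {i \<in> I. V i \<noteq> topspace X}"
    by (rule finite_subset[OF sub U(1)])
  have xin: "x \<in> PiE I V" unfolding PiE_iff using V xext by blast
  have VU: "PiE I V \<subseteq> PiE I U"
    by (rule subsetI) (simp add: PiE_iff, use V in blast)
  show "\<exists>W. openin (product_topology (\<lambda>_. X) I) W \<and> closedin (product_topology (\<lambda>_. X) I) W \<and> x \<in> W \<and> W \<subseteq> S"
  proof (intro exI conjI)
    show "openin (product_topology (\<lambda>_. X) I) (PiE I V)"
      unfolding openin_PiE_gen using fin V by blast
    show "closedin (product_topology (\<lambda>_. X) I) (PiE I V)"
      unfolding closedin_product_topology using V by blast
    show "x \<in> PiE I V" by (rule xin)
    show "PiE I V \<subseteq> S" using VU U(4) by blast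
  qed
qed

lemma zd_subtopology:
  assumes "zero_dimensional X"
  shows "zero_dimensional (subtopology X T)"
  unfolding zero_dimensional_def
proof (intro allI impI, elim conjE)
  fix U x assume "openin (subtopology X T) U" "x \<in> U"
  then obtain S where S: "openin X S" "U = S \<inter> T" by (auto simp: openin_subtopology)
  then obtain W where W: "openin X W" "closedin X W" "x \<in> W" "W \<subseteq> S"
    using assms \<open>x \<in> U\<close> unfolding zero_dimensional_def by blast
  show "\<exists>V. openin (subtopology X T) V \<and> closedin (subtopology X T) V \<and> x \<in> V \<and> V \<subseteq> U"
    apply (rule exI[of _ "T \<inter> W"])
    using W S \<open>x \<in> U\<close> openin_subtopology_Int2[OF W(1)] closedin_subtopology_Int_closed[OF W(2)]
    by auto
qed

lemma zd_regular:
  assumes "zero_dimensional X"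
  shows "regular_space X"
  unfolding regular_space_def
proof (intro allI impI, elim conjE)
  fix C a assume C: "closedin X C" "a \<in> topspace X - C"
  then have "openin X (topspace X - C)" by auto
  then obtain W where W: "openin X W" "closedin X W" "a \<in> W" "W \<subseteq> topspace X - C"
    using assms C unfolding zero_dimensional_def by blast
  show "\<exists>U V. openin X U \<and> openin X V \<and> a \<in> U \<and> C \<subseteq> V \<and> disjnt U V"
    apply (rule exI[of _ W], rule exI[of _ "topspace X - W"])
    using W C closedin_subset[OF C(1)] by (auto simp: disjnt_def)
qed

theorem proposition4p6:
  fixes X :: "'a topology" and f :: "'g::ab_group_add \<Rightarrow> 'a"
  assumes "\<exists>a b. a \<in> topspace X \<and> b \<in> topspace X \<and> a \<noteq> b"
    and "infinite (UNIV :: 'g set)"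
    and "\<not> anti_discrete X"
    and "zero_dimensional X"
    and "korovin_mapping X f"
  shows "t1_space (subtopology (product_topology (\<lambda>_. X) UNIV) (orbit_of f))
       \<and> regular_space (subtopology (product_topology (\<lambda>_. X) UNIV) (orbit_of f))
       \<and> zero_dimensional (subtopology (product_topology (\<lambda>_. X) UNIV) (orbit_of f))"
proof -
  let ?P = "product_topology (\<lambda>_. X) (UNIV::'g set)"
  let ?T = "subtopology ?P (orbit_of f)"
  have zd: "zero_dimensional ?T" using zd_subtopology[OF zd_product[OF assms(4)]] .
  obtain U where U: "openin X U" "U \<noteq> {}" "U \<noteq> topspace X"
    using assms(3) unfolding anti_discrete_def by blast
  obtain a where a: "a \<in> U" using U(2) by blast
  obtain b where b: "b \<in> topspace X" "b \<notin> U" using U(3) openin_subset[OF U(1)] by blast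
  obtain V where V: "openin X V" "closedin X V" "a \<in> V" "V \<subseteq> U"
    using assms(4) U(1) a unfolding zero_dimensional_def by blast
  have aX: "a \<in> topspace X" using a openin_subset[OF U(1)] by blast
  have bV: "b \<notin> V" using b V by blast
  have t1: "t1_space ?T"
    unfolding t1_space_def
  proof (intro ballI impI)
    fix p q assume p: "p \<in> topspace ?T" and q: "q \<in> topspace ?T" and pq: "p \<noteq> q"
    obtain g where g: "p = shift_act g f" using p by (auto simp: orbit_of_def)
    obtain h where h: "q = shift_act h f" using q by (auto simp: orbit_of_def)
    have gh: "g \<noteq> h" using pq g h by auto
    let ?M = "{0, h - g}"
    have "countable ?M" by simp
    then have eq: "(\<lambda>k. restrict k ?M) ` orbit_of f = PiE ?M (\<lambda>_. topspace X)"
      using assms(5) unfolding korovin_mapping_def by blast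
    define e where "e = (\<lambda>k::'g. if k = 0 then a else if k = h - g then b else undefined)"
    have "h - g \<noteq> 0" using gh by simp
    then have "e \<in> PiE ?M (\<lambda>_. topspace X)" using aX b
      unfolding PiE_iff extensional_def e_def by auto
    then have "e \<in> (\<lambda>k. restrict k ?M) ` orbit_of f" using eq by simp
    then obtain r where r: "r \<in> orbit_of f" "e = restrict r ?M" by (rule imageE)
    obtain s where s: "r = shift_act s f" using r(1) unfolding orbit_of_def by blast
    have fs: "f s = a" and fsd: "f (h - g + s) = b"
    proof -
      have "e 0 = r 0" "e (h - g) = r (h - g)" using r(2) by simp_all
      then show "f s = a" "f (h - g + s) = b" using \<open>h - g \<noteq> 0\<close>
        by (simp_all add: s shift_act_def e_def add.commute)
    qed
    define x where "x = s - g"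
    have px: "p x = a" using fs by (simp add: g shift_act_def x_def)
    have qx: "q x = b" using fsd by (simp add: h shift_act_def x_def algebra_simps)
    let ?W = "orbit_of f \<inter> {y \<in> topspace ?P. y x \<in> V}"
    have cm: "continuous_map ?P X (\<lambda>y. y x)"
      using continuous_map_product_projection[of x UNIV "\<lambda>_. X"] by simp
    have "openin ?P {y \<in> topspace ?P. y x \<in> V}"
      by (rule openin_continuous_map_preimage[OF cm V(1)])
    then have "openin ?T ?W" by (rule openin_subtopology_Int2)
    moreover have "p \<in> ?W" using p px V(3) by (simp add: topspace_subtopology)
    moreover have "q \<notin> ?W" using qx bV by simp
    ultimately show "\<exists>W. openin ?T W \<and> p \<in> W \<and> q \<notin> W" by blast
  qed
  show ?thesis using t1 zd zd_regular[OF zd] by blast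
qed

end
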